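(* Let $S$ be a positive integer, $M>0$, and let $G=\bigcup_{i=1}^t\left[\theta_i-\frac{\zeta_i}{M},\theta_i+\frac{\zeta_i}{M}\right]\subset\mathbb{R}$ be a union of $t$ pairwise disjoint intervals, with $t\le S$, $\zeta_i\ge0$ and $\sum_{i=1}^t\zeta_i\le S\zeta$. If $\zeta\le\frac{1}{8S(2S-1)}$, then there exists $m\in[2,4]$ such that $$\left[\theta_i-\frac{\zeta_i}{M}-\frac{q}{Mm},\ \theta_i+\frac{\zeta_i}{M}-\frac{q}{Mm}\right]\cap\left[\theta_j-\frac{\zeta_j}{M},\ \theta_j+\frac{\zeta_j}{M}\right]=\varnothing$$ for all $1\le i,j\le t$ and all $q\in\mathbb{Z}\setminus\{0\}$. *)

theory Defs
  imports Complex_Main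
begin

end

theory Submission
  imports Defs "HOL-Analysis.Analysis"
begin

lemma cover:
  fixes l u :: "'i \<Rightarrow> real" and a b :: real
  assumes fin: "finite I" and lt: "(\<Sum>k\<in>I. (u k - l k)) < b - a" and le: "\<forall>k\<in>I. l k \<le> u k"
  shows "\<exists>x. a < x \<and> x \<le> b \<and> (\<forall>k\<in>I. x \<notin> {l k..u k})"
proof (rule ccontr)
  assume "\<not> ?thesis"
  hence sub: "{a<..b} \<subseteq> (\<Union>k\<in>I. {l k..u k})" by auto
  have "0 \<le> (\<Sum>k\<in>I. (u k - l k))" using le by (intro sum_nonneg) auto
  hence ab: "a \<le> b" using lt by simp
  have "b - a = measure lborel {a<..b}" using ab by simp
  also have "\<dots> \<le> measure lborel (\<Union>k\<in>I. {l k..u k})"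
    apply (rule measure_mono_fmeasurable[OF sub])
     apply simp
    apply (rule fmeasurable_compact)
    using fin by (intro compact_UN) auto
  also have "\<dots> \<le> (\<Sum>k\<in>I. measure lborel {l k..u k})"
    by (rule measure_UNION_le[OF fin]) auto
  also have "\<dots> = (\<Sum>k\<in>I. (u k - l k))" using le by (intro sum.cong) auto
  finally show False using lt by simp
qed

lemma harm:
  fixes c r :: real
  assumes r8: "8*r < 1"
  shows "finite {k::nat. 1 \<le> k \<and> 2*(c-r) \<le> real k \<and> real k \<le> 4*(c+r)}"
    and "(\<Sum>k\<in>{k::nat. 1 \<le> k \<and> 2*(c-r) \<le> real k \<and> real k \<le> 4*(c+r)}. 1 / real k) \<le> 2"
proof -
  define Q where "Q = {k::nat. 1 \<le> k \<and> 2*(c-r) \<le> real k \<and> real k \<le> 4*(c+r)}"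
  have "Q \<subseteq> {..nat \<lceil>4*(c+r)\<rceil>}" unfolding Q_def by (auto simp: le_nat_iff) (metis ceiling_mono ceiling_of_nat)
  hence fin: "finite Q" by (rule finite_subset) simp
  thus "finite {k::nat. 1 \<le> k \<and> 2*(c-r) \<le> real k \<and> real k \<le> 4*(c+r)}" unfolding Q_def .
  have "(\<Sum>k\<in>Q. 1 / real k) \<le> 2"
  proof (cases "Q = {}")
    case True thus ?thesis by simp
  next
    case False
    define n where "n = Min Q"
    have nQ: "n \<in> Q" using fin False n_def by simp
    have n1: "n \<ge> 1" and n2: "2*(c-r) \<le> real n" using nQ Q_def by auto
    have sub: "Q \<subseteq> {n..2*n}"
    proof
      fix k assume k: "k \<in> Q"
      have "n \<le> k" using fin k n_def by simp
      moreover have "real k \<le> 4*(c+r)" using k Q_def by auto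
      hence "real k < real (2*n) + 1" using n2 r8 by simp
      hence "k \<le> 2*n" by linarith
      ultimately show "k \<in> {n..2*n}" by simp
    qed
    have "(\<Sum>k\<in>Q. 1 / real k) \<le> (\<Sum>k\<in>Q. 1 / real n)"
      apply (rule sum_mono) using sub n1 by (auto intro!: divide_left_mono)
    also have "\<dots> = real (card Q) / real n" by simp
    also have "\<dots> \<le> real (n+1) / real n"
    proof -
      have "card Q \<le> card {n..2*n}" by (rule card_mono[OF _ sub]) simp
      hence "card Q \<le> n + 1" by simp
      thus ?thesis using n1 by (intro divide_right_mono) auto
    qed
    also have "\<dots> \<le> 2" using n1 by (simp add: field_simps)
    finally show ?thesis .
  qed
  thus "(\<Sum>k\<in>{k::nat. 1 \<le> k \<and> 2*(c-r) \<le> real k \<and> real k \<le> 4*(c+r)}. 1 / real k) \<le> 2"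
    unfolding Q_def .
qed

lemma pairsum:
  fixes z :: "nat \<Rightarrow> real"
  shows "(\<Sum>j=1..t. \<Sum>i=1..<j. z j + z i) = (real t - 1) * (\<Sum>i=1..t. z i)"
proof (induction t)
  case 0 thus ?case by simp
next
  case (Suc t)
  have "(\<Sum>j=1..Suc t. \<Sum>i=1..<j. z j + z i) = (\<Sum>j=1..t. \<Sum>i=1..<j. z j + z i) + (\<Sum>i=1..<Suc t. z (Suc t) + z i)"
    by simp
  also have "\<dots> = (real t - 1) * (\<Sum>i=1..t. z i) + (real t * z (Suc t) + (\<Sum>i=1..t. z i))"
    using Suc by (simp add: sum.distrib atLeastLessThanSuc_atLeastAtMost)
  also have "\<dots> = (real (Suc t) - 1) * (\<Sum>i=1..Suc t. z i)"
    by (simp add: algebra_simps)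
  finally show ?case .
qed

theorem lemma2:
  fixes S t :: nat and M \<zeta> :: real and \<theta> \<zeta>s :: "nat \<Rightarrow> real"
  assumes "S > 0" and "M > 0" and "t \<le> S"
    and "\<And>i. i \<in> {1..t} \<Longrightarrow> \<zeta>s i \<ge> 0"
    and "\<And>i j. i \<in> {1..t} \<Longrightarrow> j \<in> {1..t} \<Longrightarrow> i \<noteq> j \<Longrightarrow>
           {\<theta> i - \<zeta>s i / M .. \<theta> i + \<zeta>s i / M} \<inter> {\<theta> j - \<zeta>s j / M .. \<theta> j + \<zeta>s j / M} = {}"
    and "(\<Sum>i=1..t. \<zeta>s i) \<le> real S * \<zeta>"
    and "\<zeta> \<le> 1 / (8 * real S * (2 * real S - 1))"
  shows "\<exists>m::real. 2 \<le> m \<and> m \<le> 4 \<and>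
    (\<forall>i\<in>{1..t}. \<forall>j\<in>{1..t}. \<forall>q::int. q \<noteq> 0 \<longrightarrow>
       {\<theta> i - \<zeta>s i / M - real_of_int q / (M * m) .. \<theta> i + \<zeta>s i / M - real_of_int q / (M * m)}
       \<inter> {\<theta> j - \<zeta>s j / M .. \<theta> j + \<zeta>s j / M} = {})"
proof -
  note S0 = assms(1) and M0 = assms(2) and tS = assms(3) and zpos = assms(4)
    and disj = assms(5) and sumz = assms(6) and zeta = assms(7)
  define Z where "Z = (\<Sum>i=1..t. \<zeta>s i)"
  have Z0: "0 \<le> Z" unfolding Z_def using zpos by (intro sum_nonneg) auto
  have S1: "real S \<ge> 1" using S0 by simp
  have Zb: "Z \<le> 1 / (8 * (2 * real S - 1))"
  proof -
    have "Z \<le> real S * \<zeta>" using sumz Z_def by simp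
    also have "\<dots> \<le> real S * (1 / (8 * real S * (2 * real S - 1)))"
      using zeta S0 by (intro mult_left_mono) auto
    also have "\<dots> = 1 / (8 * (2 * real S - 1))" using S0 by (simp add: field_simps)
    finally show ?thesis .
  qed
  have Z8: "8 * Z \<le> 1 / (2 * real S - 1)" using Zb S1 by (simp add: field_simps)
  have zi_le: "\<zeta>s i \<le> Z" if "i \<in> {1..t}" for i
    unfolding Z_def using zpos that by (intro member_le_sum) auto
  have zij_le: "\<zeta>s i + \<zeta>s j \<le> Z" if "i \<in> {1..t}" "j \<in> {1..t}" "i \<noteq> j" for i j
  proof -
    have "(\<Sum>k\<in>{i,j}. \<zeta>s k) \<le> Z"
      unfolding Z_def using zpos that by (intro sum_mono2) auto
    thus ?thesis using that by simp
  qed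
  have r8: "8 * (\<zeta>s i + \<zeta>s j) < 1" if "i \<in> {1..t}" "j \<in> {1..t}" "i \<noteq> j" for i j
  proof -
    have "t \<ge> 2" using that by auto
    hence "real S \<ge> 2" using tS by simp
    hence "1 / (2 * real S - 1) < 1" by (simp add: field_simps)
    moreover have "8 * (\<zeta>s i + \<zeta>s j) \<le> 8 * Z" using zij_le[OF that] by simp
    ultimately show ?thesis using Z8 by (meson order_le_less_trans order_trans)
  qed
  define c where "c = (\<lambda>i j. M * \<bar>\<theta> i - \<theta> j\<bar>)"
  define r where "r = (\<lambda>i j. \<zeta>s i + \<zeta>s j)"
  define P where "P = Sigma {1..t} (\<lambda>j. {1..<j})"
  define Q where "Q = (\<lambda>p. {k::nat. 1 \<le> k \<and> 2*(c (fst p) (snd p) - r (fst p) (snd p)) \<le> real k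
                          \<and> real k \<le> 4*(c (fst p) (snd p) + r (fst p) (snd p))})"
  define I where "I = Sigma P Q"
  define l where "l = (\<lambda>x::(nat\<times>nat)\<times>nat. (c (fst (fst x)) (snd (fst x)) - r (fst (fst x)) (snd (fst x))) / real (snd x))"
  define u where "u = (\<lambda>x::(nat\<times>nat)\<times>nat. (c (fst (fst x)) (snd (fst x)) + r (fst (fst x)) (snd (fst x))) / real (snd x))"
  have Pmem: "p \<in> P \<Longrightarrow> fst p \<in> {1..t} \<and> snd p \<in> {1..t} \<and> fst p \<noteq> snd p" for p
    unfolding P_def by auto
  have r8P: "8 * r (fst p) (snd p) < 1" if "p \<in> P" for p
    using r8 Pmem[OF that] unfolding r_def by blast
  have finP: "finite P" unfolding P_def by auto
  have finQ: "finite (Q p)" if "p \<in> P" for p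
    unfolding Q_def using harm(1)[OF r8P[OF that]] .
  have finI: "finite I" unfolding I_def using finP finQ by auto
  have rpos: "0 \<le> r (fst p) (snd p)" if "p \<in> P" for p
    using Pmem[OF that] zpos unfolding r_def by (simp add: add_nonneg_nonneg)
  have le: "\<forall>x\<in>I. l x \<le> u x"
  proof
    fix x assume x: "x \<in> I"
    hence "fst x \<in> P" "snd x \<in> Q (fst x)" unfolding I_def by auto
    hence "0 \<le> r (fst (fst x)) (snd (fst x))" "real (snd x) > 0" using rpos unfolding Q_def by auto
    thus "l x \<le> u x" unfolding l_def u_def by (intro divide_right_mono) auto
  qed
  have sumI: "(\<Sum>x\<in>I. u x - l x) < 1/2 - 1/4"
  proof -
    have "(\<Sum>x\<in>I. u x - l x) = (\<Sum>p\<in>P. \<Sum>k\<in>Q p. u (p,k) - l (p,k))"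
      unfolding I_def using finP finQ by (subst sum.Sigma) auto
    also have "\<dots> = (\<Sum>p\<in>P. 2 * r (fst p) (snd p) * (\<Sum>k\<in>Q p. 1 / real k))"
      unfolding u_def l_def by (intro sum.cong refl) (simp add: sum_distrib_left diff_divide_distrib[symmetric])
    also have "\<dots> \<le> (\<Sum>p\<in>P. 2 * r (fst p) (snd p) * 2)"
    proof (intro sum_mono mult_left_mono)
      fix p assume p: "p \<in> P"
      show "(\<Sum>k\<in>Q p. 1 / real k) \<le> 2" unfolding Q_def using harm(2)[OF r8P[OF p]] .
      show "0 \<le> 2 * r (fst p) (snd p)" using rpos[OF p] by simp
    qed
    also have "\<dots> = 4 * (\<Sum>j=1..t. \<Sum>i=1..<j. \<zeta>s j + \<zeta>s i)"
      unfolding P_def r_def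
    proof -
      have "(\<Sum>j=1..t. \<Sum>i=1..<j. 4 * (\<zeta>s j + \<zeta>s i)) = (\<Sum>(j,i)\<in>Sigma {1..t} (\<lambda>j. {1..<j}). 4 * (\<zeta>s j + \<zeta>s i))"
        by (rule sum.Sigma) auto
      thus "(\<Sum>p\<in>Sigma {1..t} (\<lambda>j. {1..<j}). 2 * (\<zeta>s (fst p) + \<zeta>s (snd p)) * 2) = 4 * (\<Sum>j=1..t. \<Sum>i=1..<j. \<zeta>s j + \<zeta>s i)"
        by (simp add: split_def sum_distrib_left)
    qed
    also have "\<dots> = 4 * ((real t - 1) * Z)" unfolding Z_def using pairsum[of \<zeta>s t] by simp
    also have "\<dots> < 1/4"
    proof (cases "t = 0")
      case True thus ?thesis using Z0 by simp
    next
      case False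
      hence "0 \<le> real t - 1" "real t - 1 \<le> real S - 1" using tS by auto
      hence "(real t - 1) * Z \<le> (real S - 1) * (1 / (8 * (2 * real S - 1)))"
        using Z0 Zb by (intro mult_mono) auto
      also have "\<dots> < 1 / 16" using S1 by (simp add: field_simps)
      finally show ?thesis by simp
    qed
    finally show ?thesis by simp
  qed
  obtain a where a1: "1/4 < a" and a2: "a \<le> 1/2" and anot: "\<forall>x\<in>I. a \<notin> {l x..u x}"
    using cover[OF finI sumI le] by blast
  have apos: "a > 0" using a1 by simp
  define m where "m = 1 / a"
  have m2: "2 \<le> m" and m4: "m \<le> 4" unfolding m_def using a1 a2 apos by (simp_all add: field_simps)
  have key: "r i j < \<bar>M * (\<theta> i - \<theta> j) - real_of_int q * a\<bar>"
    if i: "i \<in> {1..t}" and j: "j \<in> {1..t}" and q: "q \<noteq> 0" for i j q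
  proof (cases "i = j")
    case True
    have "\<bar>real_of_int q\<bar> \<ge> 1" using q by linarith
    hence "a \<le> \<bar>real_of_int q\<bar> * a" using apos by simp
    hence "1/4 < \<bar>real_of_int q\<bar> * a" using a1 by linarith
    hence "1/4 < \<bar>real_of_int q * a\<bar>" using apos by (simp add: abs_mult)
    moreover have "2 * \<zeta>s i \<le> 1/4"
    proof -
      have "1 / (8 * (2 * real S - 1)) \<le> 1/8" using S1 by (simp add: field_simps)
      thus ?thesis using zi_le[OF i] Zb by linarith
    qed
    ultimately show ?thesis using True unfolding r_def by simp
  next
    case False
    define d where "d = M * (\<theta> i - \<theta> j)"
    have rd: "r i j < \<bar>d\<bar>"
    proof (rule ccontr)
      assume "\<not> ?thesis"
      hence "M * \<bar>\<theta> i - \<theta> j\<bar> \<le> \<zeta>s i + \<zeta>s j" unfolding d_def r_def using M0 by (simp add: abs_mult)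
      hence h: "\<bar>\<theta> i - \<theta> j\<bar> \<le> \<zeta>s i / M + \<zeta>s j / M" using M0 by (simp add: field_simps)
      have zi: "0 \<le> \<zeta>s i / M" "0 \<le> \<zeta>s j / M" using zpos i j M0 by auto
      show False
      proof (cases "\<theta> i \<le> \<theta> j")
        case True
        define x where "x = max (\<theta> i) (\<theta> j - \<zeta>s j / M)"
        have "x \<in> {\<theta> i - \<zeta>s i / M .. \<theta> i + \<zeta>s i / M} \<inter> {\<theta> j - \<zeta>s j / M .. \<theta> j + \<zeta>s j / M}"
          unfolding x_def using True h zi by auto
        thus False using disj[OF i j False] by blast
      next
        case False': False
        define x where "x = max (\<theta> j) (\<theta> i - \<zeta>s i / M)"
        have "x \<in> {\<theta> i - \<zeta>s i / M .. \<theta> i + \<zeta>s i / M} \<inter> {\<theta> j - \<zeta>s j / M .. \<theta> j + \<zeta>s j / M}"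
          unfolding x_def using False' h zi by auto
        thus False using disj[OF i j False] by blast
      qed
    qed
    show ?thesis unfolding d_def[symmetric]
    proof (rule ccontr)
      assume "\<not> r i j < \<bar>d - real_of_int q * a\<bar>"
      hence bad: "\<bar>d - real_of_int q * a\<bar> \<le> r i j" by simp
      define k where "k = nat \<bar>q\<bar>"
      have kq: "real k = \<bar>real_of_int q\<bar>" unfolding k_def by simp
      have k1: "k \<ge> 1" using q unfolding k_def by linarith
      have ka: "real k * a = \<bar>real_of_int q * a\<bar>" using kq apos by (simp add: abs_mult)
      have b2: "\<bar>\<bar>d\<bar> - real k * a\<bar> \<le> r i j" using bad ka abs_triangle_ineq3[of d "real_of_int q * a"] by linarith
      define p where "p = (max i j, min i j)"
      have pP: "p \<in> P" unfolding p_def P_def using i j False by auto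
      have cp: "c (fst p) (snd p) = \<bar>d\<bar>" unfolding p_def c_def d_def using M0
        by (cases "i < j") (auto simp: abs_mult max_def min_def abs_minus_commute)
      have rp: "r (fst p) (snd p) = r i j" unfolding p_def r_def
        by (cases "i < j") (auto simp: max_def min_def)
      have lo: "\<bar>d\<bar> - r i j \<le> real k * a" and hi: "real k * a \<le> \<bar>d\<bar> + r i j" using b2 by linarith+
      have "real k * a \<le> real k * (1/2)" using a2 by (intro mult_left_mono) auto
      hence "real k * a \<le> real k / 2" by simp
      with lo have "\<bar>d\<bar> - r i j \<le> real k / 2" by (rule order_trans)
      hence kQ1: "2 * (\<bar>d\<bar> - r i j) \<le> real k" by (simp add: field_simps)
      have "real k * (1/4) \<le> real k * a" using a1 by (intro mult_left_mono) auto
      hence "real k / 4 \<le> real k * a" by simp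
      hence "real k / 4 \<le> \<bar>d\<bar> + r i j" using hi by (rule order_trans)
      hence kQ2: "real k \<le> 4 * (\<bar>d\<bar> + r i j)" by (simp add: field_simps)
      have kQ: "k \<in> Q p" unfolding Q_def using cp rp k1 kQ1 kQ2 by simp
      have "(p, k) \<in> I" unfolding I_def using pP kQ by simp
      moreover have "a \<in> {l (p,k) .. u (p,k)}"
        unfolding l_def u_def using cp rp lo hi k1 by (simp add: pos_divide_le_eq pos_le_divide_eq mult.commute)
      ultimately show False using anot by blast
    qed
  qed
  show ?thesis
  proof (intro exI conjI ballI allI impI)
    show "2 \<le> m" "m \<le> 4" using m2 m4 .
    fix i j q assume i: "i \<in> {1..t}" and j: "j \<in> {1..t}" and q: "(q::int) \<noteq> 0"
    have sh: "M * (real_of_int q / (M * m)) = real_of_int q * a" unfolding m_def using M0 apos by (simp add: field_simps)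
    show "{\<theta> i - \<zeta>s i / M - real_of_int q / (M * m) .. \<theta> i + \<zeta>s i / M - real_of_int q / (M * m)}
       \<inter> {\<theta> j - \<zeta>s j / M .. \<theta> j + \<zeta>s j / M} = {}"
    proof (rule ccontr)
      assume "\<not> ?thesis"
      then obtain x where "x \<in> {\<theta> i - \<zeta>s i / M - real_of_int q / (M * m) .. \<theta> i + \<zeta>s i / M - real_of_int q / (M * m)}
       \<inter> {\<theta> j - \<zeta>s j / M .. \<theta> j + \<zeta>s j / M}" by blast
      then have x1: "\<theta> i - \<zeta>s i / M - real_of_int q / (M * m) \<le> x" "x \<le> \<theta> i + \<zeta>s i / M - real_of_int q / (M * m)"
        and x2: "\<theta> j - \<zeta>s j / M \<le> x" "x \<le> \<theta> j + \<zeta>s j / M" by auto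
      have "\<bar>\<theta> i - real_of_int q / (M * m) - \<theta> j\<bar> \<le> \<zeta>s i / M + \<zeta>s j / M" using x1 x2 by linarith
      hence "M * \<bar>\<theta> i - real_of_int q / (M * m) - \<theta> j\<bar> \<le> M * (\<zeta>s i / M + \<zeta>s j / M)"
        using M0 by (intro mult_left_mono) auto
      also have "\<dots> = r i j" unfolding r_def using M0 by (simp add: field_simps)
      finally have F: "M * \<bar>\<theta> i - real_of_int q / (M * m) - \<theta> j\<bar> \<le> r i j" .
      have EQ: "M * \<bar>\<theta> i - real_of_int q / (M * m) - \<theta> j\<bar> = \<bar>M * (\<theta> i - \<theta> j) - real_of_int q * a\<bar>"
      proof -
        have e: "M * (\<theta> i - real_of_int q / (M * m) - \<theta> j) = M * (\<theta> i - \<theta> j) - real_of_int q * a"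
          using sh by (simp add: right_diff_distrib)
        have "M * \<bar>\<theta> i - real_of_int q / (M * m) - \<theta> j\<bar> = \<bar>M * (\<theta> i - real_of_int q / (M * m) - \<theta> j)\<bar>"
          using M0 by (simp add: abs_mult)
        thus ?thesis using e by simp
      qed
      show False using F EQ key[OF i j q] by linarith
    qed
  qed
qed

end
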